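(* Let $q\in\mathbb{C}$ with $0<|q|<1$ and $m,n\in\mathbb{N}$. Then \[ \frac{1}{(q)_\infty}\sum_{k=0}^\infty\frac{q^{k^2}}{(q)_k (q)_{n-k}(q)_{m-k}} =\frac{1}{(q)_m(q)_n} \sum_{k=0}^{\infty}\frac{q^{k^2}(q)_{m+n+k}}{(q)_k (q)_{m+k}(q)_{n+k}}, \] and \[ \frac{1}{(q)_\infty}\sum_{k=0}^\infty\frac{q^{k^2+k}}{(q)_k (q)_{n-k}(q)_{m-k}} =\frac{1}{(q)_m(q)_n} \sum_{k=0}^{\infty}\frac{q^{k^2+k}(q)_{m+n+k+1}}{(q)_k (q)_{m+k+1}(q)_{n+k+1}}. \]
   Context: $(q)_n=(1-q)(1-q^2)\cdots(1-q^n)$ for $n\ge0$ (with $(q)_0=1$), $1/(q)_n=0$ for $n<0$, and $(q)_\infty=\prod_{i\ge1}(1-q^i)$. *)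

theory Defs
  imports "HOL-Analysis.Analysis"
begin

definition qpoch :: "complex \<Rightarrow> nat \<Rightarrow> complex" where
  "qpoch q n = (\<Prod>i=1..n. 1 - q ^ i)"

definition qpoch_inv :: "complex \<Rightarrow> int \<Rightarrow> complex" where
  "qpoch_inv q n = (if n < 0 then 0 else 1 / qpoch q (nat n))"

definition qpoch_inf :: "complex \<Rightarrow> complex" where
  "qpoch_inf q = (\<Prod>i. 1 - q ^ Suc i)"

end

theory Submission
  imports Defs
begin

lemma qpoch_0[simp]: "qpoch q 0 = 1" by (simp add: qpoch_def)

lemma qpoch_Suc: "qpoch q (Suc n) = qpoch q n * (1 - q ^ Suc n)"
  by (simp add: qpoch_def prod.nat_ivl_Suc')

lemma qpoch_alt: "qpoch q n = (\<Prod>i<n. 1 - q ^ Suc i)"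
  by (induction n) (simp_all add: qpoch_Suc lessThan_Suc mult.commute)

lemma qpoch_nz: assumes "norm q < 1" shows "qpoch q n \<noteq> 0"
proof -
  have "1 - q ^ Suc i \<noteq> 0" for i
  proof
    assume "1 - q ^ Suc i = 0"
    hence "norm (q ^ Suc i) = 1" by (metis eq_iff_diff_eq_0 norm_one)
    moreover have "norm (q ^ Suc i) < 1"
      using assms by (simp add: norm_power power_less_one_iff del: power_Suc)
    ultimately show False by simp
  qed
  thus ?thesis by (simp add: qpoch_alt)
qed

lemma qpoch_inv_0[simp]: "qpoch_inv q 0 = 1"
  by (simp add: qpoch_inv_def)

lemma qpoch_inv_negative[simp]: "n < 0 \<Longrightarrow> qpoch_inv q n = 0"
  by (simp add: qpoch_inv_def)

lemma qpoch_inv_nat: "qpoch_inv q (int n) = 1 / qpoch q n"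
  by (simp add: qpoch_inv_def)

lemma qpoch_inv_neg: "k > n \<Longrightarrow> qpoch_inv q (int n - int k) = 0"
  by (simp add: qpoch_inv_def)

lemma qpoch_inv_Suc1: "qpoch_inv q (1 + int n) = 1 / qpoch q (Suc n)"
  using qpoch_inv_nat[of q "Suc n"] by simp

lemma qpoch_inv_le: "k \<le> n \<Longrightarrow> qpoch_inv q (int n - int k) = 1 / qpoch q (n - k)"
  by (simp add: qpoch_inv_def of_nat_diff[symmetric] del: of_nat_diff)

context
  fixes q :: complex
  assumes q1: "norm q < 1"
begin

lemma conv_aux: "convergent_prod (\<lambda>i. 1 + c * norm q ^ Suc i)" 
  "convergent_prod (\<lambda>i. 1 - q ^ Suc i)"
proof -
  have s: "summable (\<lambda>i. norm q ^ Suc i)" using q1 by (simp add: summable_geometric)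
  show "convergent_prod (\<lambda>i. 1 + c * norm q ^ Suc i)"
    apply (rule abs_convergent_prod_imp_convergent_prod, rule summable_imp_abs_convergent_prod)
    using summable_mult[OF s, of "\<bar>c\<bar>"] by (simp add: abs_mult)
  show "convergent_prod (\<lambda>i. 1 - q ^ Suc i)"
    apply (rule abs_convergent_prod_imp_convergent_prod, rule summable_imp_abs_convergent_prod)
    using s by (simp add: norm_power del: power_Suc)
qed

lemma qpoch_lim: "qpoch q \<longlonglongrightarrow> qpoch_inf q"
proof -
  have "(\<lambda>n. \<Prod>i\<le>n. 1 - q ^ Suc i) \<longlonglongrightarrow> qpoch_inf q"
    unfolding qpoch_inf_def by (rule convergent_prod_LIMSEQ[OF conv_aux(2)])
  hence "(\<lambda>n. qpoch q (Suc n)) \<longlonglongrightarrow> qpoch_inf q"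
    by (simp add: qpoch_alt lessThan_Suc_atMost)
  thus ?thesis by (rule LIMSEQ_imp_Suc)
qed

lemma qpoch_inf_nz: "qpoch_inf q \<noteq> 0"
proof -
  have "1 - q ^ Suc i \<noteq> 0" for i
    using qpoch_nz[OF q1, of "Suc i"] by (auto simp: qpoch_Suc)
  thus ?thesis unfolding qpoch_inf_def by (rule prodinf_nonzero[OF conv_aux(2)])
qed

lemma qpoch_lower: "\<exists>L>0. \<forall>n. L \<le> norm (qpoch q n)"
proof -
  let ?f = "\<lambda>i. 1 + (-1) * norm q ^ Suc i"
  have pos: "?f i > 0" for i using q1 by (simp add: power_less_one_iff del: power_Suc)
  have c: "convergent_prod ?f" by (rule conv_aux(1))
  have L: "prodinf ?f > 0" by (rule less_0_prodinf[OF c pos])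
  have "prodinf ?f \<le> norm (qpoch q n)" for n
  proof -
    have "prodinf ?f \<le> prod ?f {..<n}"
      by (rule prod_ge_prodinf) (use c pos less_imp_le in \<open>auto\<close>)
    also have "\<dots> \<le> (\<Prod>i<n. norm (1 - q ^ Suc i))"
    proof (rule prod_mono, safe)
      fix i show "0 \<le> ?f i" using pos less_imp_le by blast
      have "norm (1::complex) - norm (q ^ Suc i) \<le> norm (1 - q ^ Suc i)" by (rule norm_triangle_ineq2)
      thus "?f i \<le> norm (1 - q ^ Suc i)" by (simp add: norm_power del: power_Suc)
    qed
    also have "\<dots> = norm (qpoch q n)" by (simp add: qpoch_alt prod_norm)
    finally show ?thesis .
  qed
  thus ?thesis using L by blast
qed

lemma qpoch_upper: "\<exists>U. \<forall>n. norm (qpoch q n) \<le> U"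
proof -
  let ?f = "\<lambda>i. 1 + 1 * norm q ^ Suc i"
  have c: "convergent_prod ?f" by (rule conv_aux(1))
  have "norm (qpoch q n) \<le> prodinf ?f" for n
  proof -
    have "norm (qpoch q n) = (\<Prod>i<n. norm (1 - q ^ Suc i))" by (simp add: qpoch_alt prod_norm)
    also have "\<dots> \<le> prod ?f {..<n}"
    proof (rule prod_mono, safe)
      fix i show "0 \<le> norm (1 - q ^ Suc i)" by simp
      have "norm (1 - q ^ Suc i) \<le> norm (1::complex) + norm (q ^ Suc i)" by (rule norm_triangle_ineq4)
      thus "norm (1 - q ^ Suc i) \<le> ?f i" by (simp add: norm_power del: power_Suc)
    qed
    also have "\<dots> \<le> prodinf ?f"
      by (rule prod_le_prodinf) (use c in auto)
    finally show ?thesis .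
  qed
  thus ?thesis by blast
qed

end

lemma mono5: 
  fixes a b c d e a' b' c' d' e' :: real
  assumes "0 \<le> a" "a \<le> a'" "0 \<le> b" "b \<le> b'" "0 \<le> c" "c \<le> c'" "0 \<le> d" "d \<le> d'" "0 \<le> e" "e \<le> e'"
  shows "a*b*c*d*e \<le> a'*b'*c'*d'*e'"
  using assms by (intro mult_mono) (auto intro!: mult_nonneg_nonneg order.trans[OF _ \<open>a \<le> a'\<close>])

definition fD :: "complex \<Rightarrow> nat \<Rightarrow> nat \<Rightarrow> nat \<Rightarrow> complex" where
  "fD q N j k = q^(k^2 + j*k) * qpoch q N * qpoch_inv q (int N - int k) / (qpoch q k * qpoch q (k+j))"

context
  fixes q :: complex
  assumes q1: "norm q < 1"
begin

lemma nz: "qpoch q n \<noteq> 0" by (rule qpoch_nz[OF q1])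

lemma pascalA: "qpoch q (Suc N) * qpoch_inv q (int (Suc N) - int k) =
   q^k * qpoch q N * qpoch_inv q (int N - int k) + (1 - q^k) * qpoch q N * qpoch_inv q (int (Suc N) - int k)"
proof (cases "k \<le> N")
  case True
  hence e: "Suc N - k = Suc (N - k)" by simp
  have p: "q^k * q^(Suc (N-k)) = q^(Suc N)" using True by (simp add: power_add[symmetric])
  have "1 - q ^ Suc (N-k) \<noteq> 0" using nz[of "Suc (N-k)"] by (simp add: qpoch_Suc del: power_Suc)
  moreover have i1: "qpoch_inv q (int (Suc N) - int k) = 1 / qpoch q (Suc (N-k))"
    using qpoch_inv_le[of k "Suc N"] True e by simp
  moreover have i2: "qpoch_inv q (int N - int k) = 1 / qpoch q (N-k)"
    using qpoch_inv_le[of k N] True by simp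
  moreover have i3: "qpoch q (Suc N) = qpoch q N * (1 - q^k * q ^ Suc (N-k))"
    by (simp only: p qpoch_Suc)
  have gen: "Q * (1 - b * a) * (1 / (D * (1 - a))) = b * Q * (1 / D) + (1 - b) * Q * (1 / (D * (1 - a)))"
    if "D \<noteq> 0" "1 - a \<noteq> 0" for Q D a b :: complex
    using that by (simp add: field_simps)
  ultimately show ?thesis using nz[of "N-k"]
    unfolding i1 i2 i3 qpoch_Suc[of q "N-k"] by (intro gen) simp_all
next
  case False
  show ?thesis
  proof (cases "k = Suc N")
    case True thus ?thesis by (simp add: qpoch_inv_neg qpoch_inv_nat qpoch_Suc del: power_Suc)
  next
    case False
    thus ?thesis using \<open>\<not> k \<le> N\<close> by (simp add: qpoch_inv_neg)
  qed
qed

lemma finite_durfee: "(\<Sum>k\<le>N. fD q N j k) = 1 / qpoch q (N + j)"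
proof (induction N arbitrary: j)
  case 0
  thus ?case by (simp add: fD_def qpoch_inv_nat)
next
  case (Suc N)
  define X where "X k = q^(k^2 + Suc j * k) * qpoch q N * qpoch_inv q (int N - int k) / (qpoch q k * qpoch q (k+j))" for k
  define Y where "Y k = q^(k^2 + j * k) * (1 - q^k) * qpoch q N * qpoch_inv q (int (Suc N) - int k) / (qpoch q k * qpoch q (k+j))" for k
  have "(\<Sum>k\<le>Suc N. fD q (Suc N) j k) = (\<Sum>k\<le>Suc N. X k + Y k)"
  proof (rule sum.cong[OF refl])
    fix k
    have "fD q (Suc N) j k = q^(k^2 + j*k) * (qpoch q (Suc N) * qpoch_inv q (int (Suc N) - int k)) / (qpoch q k * qpoch q (k+j))"
      by (simp add: fD_def)
    also have "\<dots> = X k + Y k" unfolding pascalA X_def Y_def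
      using nz[of k] nz[of "k+j"] by (simp add: power_add field_simps)
    finally show "fD q (Suc N) j k = X k + Y k" .
  qed
  also have "\<dots> = (\<Sum>k\<le>Suc N. X k) + (\<Sum>k\<le>Suc N. Y k)" by (rule sum.distrib)
  also have "(\<Sum>k\<le>Suc N. X k) = (\<Sum>k\<le>N. X k)"
    by (simp add: X_def qpoch_inv_def)
  also have "(\<Sum>k\<le>Suc N. Y k) = (\<Sum>k\<le>N. Y (Suc k))"
    by (subst sum.atMost_Suc_shift) (simp add: Y_def)
  also have "(\<Sum>k\<le>N. X k) + (\<Sum>k\<le>N. Y (Suc k)) = (\<Sum>k\<le>N. fD q N (Suc j) k)"
    unfolding sum.distrib[symmetric]
  proof (rule sum.cong[OF refl])
    fix k
    have e1: "(Suc k)^2 + j * Suc k = (k^2 + Suc j * k) + Suc (k+j)"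
      by (simp add: power2_eq_square algebra_simps)
    have e2: "Suc k + j = Suc (k + j)" by simp
    have n1: "1 - q ^ Suc k \<noteq> 0" using nz[of "Suc k"] by (simp add: qpoch_Suc del: power_Suc)
    have n2: "1 - q ^ Suc (k+j) \<noteq> 0" using nz[of "Suc (k+j)"] by (simp add: qpoch_Suc del: power_Suc)
    have e3: "k + Suc j = Suc (k + j)" by simp
    have i: "qpoch_inv q (int (Suc N) - int (Suc k)) = qpoch_inv q (int N - int k)" by simp
    define A where "A = q^(k^2 + Suc j * k)"
    define c where "c = q ^ Suc (k+j)"
    define b where "b = q ^ Suc k"
    define Q where "Q = qpoch q N * qpoch_inv q (int N - int k)"
    have gen: "A*Q/(K*J) + A*c*(1-b)*Q/((K*(1-b))*(J*(1-c))) = A*Q/(K*(J*(1-c)))"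
      if "K \<noteq> 0" "J \<noteq> 0" "1 - b \<noteq> 0" "1 - c \<noteq> 0" for K J :: complex
    proof -
      have "A*c*(1-b)*Q/((K*(1-b))*(J*(1-c))) = ((A*c*Q)*(1-b))/((K*J*(1-c))*(1-b))"
        by (simp add: ac_simps)
      also have "\<dots> = (A*c*Q)/(K*J*(1-c))"
        using that(3) by (rule nonzero_mult_divide_mult_cancel_right)
      also have "\<dots> = (A*Q/(K*J)) * (c/(1-c))" by simp
      finally have "A*c*(1-b)*Q/((K*(1-b))*(J*(1-c))) = (A*Q/(K*J)) * (c/(1-c))" .
      moreover have "1 + c/(1-c) = 1/(1-c)" using that(4) by (simp add: field_simps)
      moreover have "A*Q/(K*(J*(1-c))) = (A*Q/(K*J)) * (1/(1-c))" by simp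
      ultimately show ?thesis by (metis distrib_left mult.right_neutral)
    qed
    have "X k = A*Q/(qpoch q k * qpoch q (k+j))" unfolding X_def A_def Q_def by simp
    moreover have "Y (Suc k) = A*c*(1-b)*Q/((qpoch q k * (1-b))*(qpoch q (k+j) * (1-c)))"
      unfolding Y_def A_def Q_def b_def c_def e1 e2 power_add i qpoch_Suc[of q k] qpoch_Suc[of q "k+j"]
      by (simp add: ac_simps)
    moreover have "fD q N (Suc j) k = A*Q/(qpoch q k * (qpoch q (k+j) * (1-c)))"
      unfolding fD_def A_def Q_def c_def e3 qpoch_Suc[of q "k+j"] by (simp add: ac_simps)
    ultimately show "X k + Y (Suc k) = fD q N (Suc j) k"
      using gen n1 n2 nz[of k] nz[of "k+j"] unfolding b_def c_def by simp
  qed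
  also have "\<dots> = 1 / qpoch q (Suc N + j)" using Suc.IH[of "Suc j"] by simp
  finally show ?case .
qed


lemma durfee: "(\<lambda>k. q^(k^2+j*k) / (qpoch q k * qpoch q (k+j))) sums (1 / qpoch_inf q)"
proof -
  obtain L where L: "L > 0" "\<And>n. L \<le> norm (qpoch q n)" using qpoch_lower[OF q1] by blast
  obtain U where U: "\<And>n. norm (qpoch q n) \<le> U" using qpoch_upper[OF q1] by blast
  define b where "b k = q^(k^2+j*k) / (qpoch q k * qpoch q (k+j))" for k
  define r where "r = norm q"
  have r: "0 \<le> r" "r < 1" using q1 by (auto simp: r_def)
  have U0: "0 \<le> U" using U[of 0] by simp
  have ipb: "norm (qpoch_inv q x) \<le> 1 / L" for x
  proof (cases "x < 0")
    case False
    hence "qpoch_inv q x = 1 / qpoch q (nat x)" by (simp add: qpoch_inv_def)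
    thus ?thesis using L(2)[of "nat x"] \<open>L > 0\<close> by (simp add: norm_divide frac_le)
  qed (use \<open>L > 0\<close> in simp)
  have invb: "norm (1 / qpoch q x) \<le> 1 / L" for x
    using L(2)[of x] \<open>L > 0\<close> by (simp add: norm_divide frac_le)
  have lim: "(\<lambda>N. fD q N j k) \<longlonglongrightarrow> b k" for k
  proof (rule LIMSEQ_offset[where k=k])
    have e: "fD q (N + k) j k = b k * (qpoch q (N+k) * (1 / qpoch q N))" for N
      by (simp add: fD_def b_def qpoch_inv_nat)
    have "(\<lambda>N. b k * (qpoch q (N+k) * (1 / qpoch q N))) \<longlonglongrightarrow> b k * (qpoch_inf q * (1 / qpoch_inf q))"
      by (intro tendsto_intros LIMSEQ_ignore_initial_segment qpoch_lim[OF q1] qpoch_inf_nz[OF q1])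
    thus "(\<lambda>N. fD q (N + k) j k) \<longlonglongrightarrow> b k" unfolding e using qpoch_inf_nz[OF q1] by simp
  qed
  have bound: "norm (fD q N j k) \<le> r^k * U * (1/L) * (1/L) * (1/L)" for N k
  proof -
    have "norm (fD q N j k) = norm (q^(k^2+j*k)) * norm (qpoch q N) * norm (qpoch_inv q (int N - int k))
        * norm (1 / qpoch q k) * norm (1 / qpoch q (k+j))"
      by (simp add: fD_def norm_mult norm_divide)
    also have "\<dots> \<le> r^k * U * (1/L) * (1/L) * (1/L)"
    proof (rule mono5)
      have kk: "k \<le> k^2+j*k" by (cases k) (auto simp: power2_eq_square)
      have "r^(k^2+j*k) \<le> r^k" by (rule power_decreasing[OF kk]) (use r in auto)
      thus "norm (q^(k^2+j*k)) \<le> r^k" by (simp add: r_def norm_power)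
    qed (auto simp: U ipb invb)
    finally show ?thesis .
  qed
  have summ: "summable (\<lambda>k. r^k * U * (1/L) * (1/L) * (1/L))"
    using r by (intro summable_mult2 summable_geometric) auto
  have T: "(\<lambda>N. suminf (\<lambda>k. fD q N j k)) \<longlonglongrightarrow> suminf b" and sb: "summable (\<lambda>k. norm (b k))"
    using tannerys_theorem[of "\<lambda>k N. fD q N j k" b sequentially, OF lim _ summ] bound
    by (auto intro!: always_eventually)
  have "suminf (\<lambda>k. fD q N j k) = 1 / qpoch q (N + j)" for N
  proof -
    have "suminf (\<lambda>k. fD q N j k) = (\<Sum>k\<le>N. fD q N j k)"
      by (rule suminf_finite) (auto simp: fD_def)
    thus ?thesis by (simp add: finite_durfee)
  qed
  hence "(\<lambda>N. 1 / qpoch q (N + j)) \<longlonglongrightarrow> suminf b" using T by simp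
  moreover have "(\<lambda>N. 1 / qpoch q (N + j)) \<longlonglongrightarrow> 1 / qpoch_inf q"
    by (intro tendsto_intros LIMSEQ_ignore_initial_segment qpoch_lim[OF q1] qpoch_inf_nz[OF q1])
  ultimately have "suminf b = 1 / qpoch_inf q" by (rule LIMSEQ_unique)
  moreover have "summable b" using sb by (rule summable_norm_cancel)
  ultimately show ?thesis unfolding b_def[symmetric] using summable_sums by fastforce
qed

end

definition tS :: "complex \<Rightarrow> nat \<Rightarrow> nat \<Rightarrow> nat \<Rightarrow> nat \<Rightarrow> complex" where
  "tS q m n j k = q^(k^2 + j*k) * qpoch q (m+n+k+j) / (qpoch q k * qpoch q (m+k+j) * qpoch q (n+k+j))"

definition PP :: "complex \<Rightarrow> nat \<Rightarrow> nat \<Rightarrow> nat \<Rightarrow> complex" where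
  "PP q m n j = (\<Sum>k\<le>m. q^(k^2+j*k) * qpoch q m * qpoch q n / qpoch q k
      * qpoch_inv q (int n - int k) * qpoch_inv q (int m - int k))"

context
  fixes q :: complex
  assumes q1: "norm q < 1"
begin

lemma nz': "qpoch q n \<noteq> 0" by (rule qpoch_nz[OF q1])

lemma one_minus_nz: "1 - q ^ Suc n \<noteq> 0"
  using nz'[of "Suc n"] by (simp add: qpoch_Suc del: power_Suc)

lemma summable_tS: "summable (tS q m n j)"
proof -
  obtain L where L: "L > 0" "\<And>n. L \<le> norm (qpoch q n)" using qpoch_lower[OF q1] by blast
  obtain U where U: "\<And>n. norm (qpoch q n) \<le> U" using qpoch_upper[OF q1] by blast
  define r where "r = norm q"
  have r: "0 \<le> r" "r < 1" using q1 by (auto simp: r_def)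
  have invb: "norm (1 / qpoch q x) \<le> 1 / L" for x
    using L(2)[of x] \<open>L > 0\<close> by (simp add: norm_divide frac_le)
  have bound: "norm (tS q m n j k) \<le> r^k * U * (1/L) * (1/L) * (1/L)" for k
  proof -
    have "norm (tS q m n j k) = norm (q^(k^2+j*k)) * norm (qpoch q (m+n+k+j)) * norm (1 / qpoch q k)
        * norm (1 / qpoch q (m+k+j)) * norm (1 / qpoch q (n+k+j))"
      by (simp add: tS_def norm_mult norm_divide)
    also have "\<dots> \<le> r^k * U * (1/L) * (1/L) * (1/L)"
    proof (rule mono5)
      have kk: "k \<le> k^2+j*k" by (cases k) (auto simp: power2_eq_square)
      have "r^(k^2+j*k) \<le> r^k" by (rule power_decreasing[OF kk]) (use r in auto)
      thus "norm (q^(k^2+j*k)) \<le> r^k" by (simp add: r_def norm_power)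
    qed (use U invb L(1) r order.trans[OF norm_ge_zero U] in auto)
    finally show ?thesis .
  qed
  have summ: "summable (\<lambda>k. r^k * U * (1/L) * (1/L) * (1/L))"
    using r by (intro summable_mult2 summable_geometric) auto
  show ?thesis by (rule summable_comparison_test[OF _ summ]) (use bound in auto)
qed

lemma tS_rec: "tS q (Suc m) (Suc n) j k = tS q m (Suc n) j k + q^(j+m+1)*(1-q^(Suc n)) * tS q m n (Suc j) k"
proof -
  define A where "A = q^(k^2+j*k)"
  define P1 where "P1 = qpoch q (Suc (m+n+k+j))"
  define M where "M = qpoch q (m+k+j)"
  define K where "K = qpoch q k"
  define N1 where "N1 = qpoch q (Suc (n+k+j))"
  define e where "e = q^(Suc (m+k+j))"
  define c where "c = q^(Suc n)"
  have ex1: "Suc (Suc (m+n+k+j)) = Suc (m+k+j) + Suc n" by simp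
  have ex2: "Suc (m+k+j) = (j+m+1)+k" by simp
  have ex3: "k^2 + Suc j * k = (k^2+j*k)+k" by simp
  have f1: "qpoch q (Suc m + Suc n + k + j) = P1 * (1 - e * c)"
  proof -
    have "Suc m + Suc n + k + j = Suc (Suc (m+n+k+j))" by simp
    moreover have "q ^ Suc (Suc (m+n+k+j)) = e * c" unfolding e_def c_def ex1 by (rule power_add)
    ultimately show ?thesis unfolding P1_def by (simp only: qpoch_Suc[of q "Suc (m+n+k+j)"])
  qed
  have f2: "qpoch q (Suc m + k + j) = M * (1 - e)"
  proof -
    have "Suc m + k + j = Suc (m+k+j)" by simp
    thus ?thesis unfolding M_def e_def by (simp only: qpoch_Suc)
  qed
  have f3: "qpoch q (Suc n + k + j) = N1" unfolding N1_def by simp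
  have l: "tS q (Suc m) (Suc n) j k = A * (P1 * (1 - e * c)) / (K * (M * (1 - e)) * N1)"
    unfolding tS_def f1 f2 f3 A_def K_def by simp
  have r1: "tS q m (Suc n) j k = A * P1 / (K * M * N1)"
    unfolding tS_def A_def P1_def M_def K_def N1_def by simp
  have g1: "qpoch q (m+n+k+Suc j) = P1" unfolding P1_def by simp
  have g2: "qpoch q (m+k+Suc j) = M * (1 - e)"
  proof -
    have "m+k+Suc j = Suc (m+k+j)" by simp
    thus ?thesis unfolding M_def e_def by (simp only: qpoch_Suc)
  qed
  have g3: "qpoch q (n+k+Suc j) = N1" unfolding N1_def by simp
  have g4: "q^(j+m+1) * q^(k^2+Suc j*k) = e * A"
    unfolding e_def A_def ex3 ex2 power_add by (simp add: ac_simps)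
  have r2: "q^(j+m+1)*(1-q^(Suc n)) * tS q m n (Suc j) k = e * (1 - c) * A * P1 / (K * (M * (1 - e)) * N1)"
  proof -
    have "q^(j+m+1)*(1-q^(Suc n)) * tS q m n (Suc j) k
       = (q^(j+m+1) * q^(k^2+Suc j*k)) * (1-c) * P1 / (K * (M * (1 - e)) * N1)"
      unfolding tS_def g1 g2 g3 K_def c_def by (simp add: ac_simps)
    thus ?thesis unfolding g4 by (simp add: ac_simps)
  qed
  have nzs: "K \<noteq> 0" "M \<noteq> 0" "N1 \<noteq> 0" "1 - e \<noteq> 0"
    unfolding K_def M_def N1_def e_def using one_minus_nz[of "m+k+j"] by (auto simp: nz' simp del: power_Suc)
  have "A * (P1 * (1 - e * c)) / (K * (M * (1 - e)) * N1) = A * P1 / (K * M * N1) + e * (1 - c) * A * P1 / (K * (M * (1 - e)) * N1)"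
    using nzs by (simp add: field_simps)
  thus ?thesis using l r1 r2 by simp
qed


lemma pascalB: "qpoch q (Suc m) * qpoch_inv q (int (Suc m) - int (Suc i)) =
   qpoch q m * qpoch_inv q (int m - int (Suc i)) + (1 - q^Suc i) * q^(m - i) * qpoch q m * qpoch_inv q (int m - int i)"
proof (cases "i < m")
  case True
  define d where "d = m - Suc i"
  have md: "m - i = Suc d" using True by (simp add: d_def)
  have i1: "qpoch_inv q (int (Suc m) - int (Suc i)) = 1 / qpoch q (Suc d)"
    using qpoch_inv_le[of "Suc i" "Suc m"] True md by simp
  have i2: "qpoch_inv q (int m - int (Suc i)) = 1 / qpoch q d"
    using qpoch_inv_le[of "Suc i" m] True by (simp add: d_def)
  have i3: "qpoch_inv q (int m - int i) = 1 / qpoch q (Suc d)"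
    using qpoch_inv_le[of i m] True md by simp
  have p: "q ^ Suc m = q ^ Suc i * q ^ Suc d"
    using True by (simp add: power_add[symmetric] d_def del: power_Suc)
  have gen: "Q * (1 - b * y) * (1 / (D * (1 - y))) = Q * (1 / D) + (1 - b) * y * Q * (1 / (D * (1 - y)))"
    if "D \<noteq> 0" "1 - y \<noteq> 0" for Q D b y :: complex
    using that by (simp add: field_simps)
  show ?thesis unfolding i1 i2 i3 md qpoch_Suc[of q m] qpoch_Suc[of q d] p
    by (rule gen) (use nz' one_minus_nz in auto)
next
  case False
  show ?thesis
  proof (cases "i = m")
    case True thus ?thesis by (simp add: qpoch_inv_nat qpoch_Suc mult.commute del: power_Suc)
  next
    case False
    thus ?thesis using \<open>\<not> i < m\<close> by simp
  qed
qed

lemma PP_n0: "PP q m 0 j = 1"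
proof -
  have "PP q m 0 j = (\<Sum>k\<in>{0}. q^(k^2+j*k) * qpoch q m * qpoch q 0 / qpoch q k
      * qpoch_inv q (int 0 - int k) * qpoch_inv q (int m - int k))"
    unfolding PP_def by (rule sum.mono_neutral_right) auto
  thus ?thesis using nz'[of m] by (simp add: qpoch_inv_nat)
qed

lemma PP_m0: "PP q 0 n j = 1"
  using nz'[of n] by (simp add: PP_def qpoch_inv_nat)

lemma PP_rec: "PP q (Suc m) (Suc n) j = PP q m (Suc n) j + q^(j+m+1)*(1-q^(Suc n)) * PP q m n (Suc j)"
proof -
  define T where "T k = q^(k^2+j*k) * qpoch q (Suc m) * qpoch q (Suc n) / qpoch q k
      * qpoch_inv q (int (Suc n) - int k) * qpoch_inv q (int (Suc m) - int k)" for k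
  define T' where "T' k = q^(k^2+j*k) * qpoch q m * qpoch q (Suc n) / qpoch q k
      * qpoch_inv q (int (Suc n) - int k) * qpoch_inv q (int m - int k)" for k
  define W where "W i = q^((Suc i)^2+j*Suc i) * qpoch q (Suc n) / qpoch q (Suc i) * qpoch_inv q (int (Suc n) - int (Suc i))
      * ((1 - q^Suc i) * q^(m - i) * qpoch q m * qpoch_inv q (int m - int i))" for i
  define c where "c = q^(j+m+1)*(1-q^(Suc n))"
  have s1: "PP q (Suc m) (Suc n) j = T 0 + (\<Sum>i\<le>m. T (Suc i))"
    unfolding PP_def T_def by (subst sum.atMost_Suc_shift) simp
  have s2: "T 0 = T' 0" unfolding T_def T'_def using nz'[of m] nz'[of "Suc m"] by (simp add: qpoch_inv_nat qpoch_inv_Suc1)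
  have s3: "(\<Sum>i\<le>m. T (Suc i)) = (\<Sum>i\<le>m. T' (Suc i)) + (\<Sum>i\<le>m. W i)"
    unfolding sum.distrib[symmetric]
  proof (rule sum.cong[OF refl])
    fix i
    have "T (Suc i) = q^((Suc i)^2+j*Suc i) * qpoch q (Suc n) / qpoch q (Suc i) * qpoch_inv q (int (Suc n) - int (Suc i))
       * (qpoch q (Suc m) * qpoch_inv q (int (Suc m) - int (Suc i)))"
      unfolding T_def by (simp add: ac_simps)
    also have "\<dots> = T' (Suc i) + W i" unfolding pascalB T'_def W_def by (simp add: algebra_simps add_divide_distrib)
    finally show "T (Suc i) = T' (Suc i) + W i" .
  qed
  have s4: "T' 0 + (\<Sum>i\<le>m. T' (Suc i)) = PP q m (Suc n) j"
  proof -
    have "T' 0 + (\<Sum>i\<le>m. T' (Suc i)) = (\<Sum>k\<le>Suc m. T' k)" by (subst sum.atMost_Suc_shift) simp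
    also have "\<dots> = (\<Sum>k\<le>m. T' k)" by (simp add: T'_def)
    finally show ?thesis unfolding PP_def T'_def .
  qed
  have s5: "(\<Sum>i\<le>m. W i) = c * PP q m n (Suc j)"
    unfolding PP_def sum_distrib_left
  proof (rule sum.cong[OF refl])
    fix i assume "i \<in> {..m}"
    hence im: "i \<le> m" by simp
    have ex: "(Suc i)^2 + j * Suc i + (m - i) = (i^2 + Suc j * i) + (j+m+1)"
      using im by (simp add: power2_eq_square algebra_simps)
    have pw: "q^((Suc i)^2+j*Suc i) * q^(m-i) = q^(i^2 + Suc j * i) * q^(j+m+1)"
      unfolding power_add[symmetric] ex ..
    have ii: "qpoch_inv q (int (Suc n) - int (Suc i)) = qpoch_inv q (int n - int i)" by simp
    define X where "X = q^(i^2 + Suc j * i) * q^(j+m+1)"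
    have "W i = (q^((Suc i)^2+j*Suc i) * q^(m-i)) * ((1 - q^Suc i) / qpoch q (Suc i)) * qpoch q (Suc n) * qpoch q m
       * qpoch_inv q (int n - int i) * qpoch_inv q (int m - int i)"
      unfolding W_def ii by (simp add: ac_simps)
    also have "(1 - q^Suc i) / qpoch q (Suc i) = 1 / qpoch q i"
      using one_minus_nz[of i] nz'[of i] by (simp add: qpoch_Suc del: power_Suc)
    finally show "W i = c * (q^(i^2 + Suc j * i) * qpoch q m * qpoch q n / qpoch q i
      * qpoch_inv q (int n - int i) * qpoch_inv q (int m - int i))"
      unfolding pw c_def qpoch_Suc[of q n] by (simp add: ac_simps del: power_Suc)
  qed
  show ?thesis using s1 s2 s3 s4 s5 unfolding c_def by (simp add: ac_simps)
qed


lemma tS_base: "tS q m 0 j = (\<lambda>k. q^(k^2+j*k) / (qpoch q k * qpoch q (k+j)))"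
  "tS q 0 n j = (\<lambda>k. q^(k^2+j*k) / (qpoch q k * qpoch q (k+j)))"
  using nz' by (auto simp: tS_def fun_eq_iff ac_simps)

lemma main_ind: "suminf (tS q m n j) = PP q m n j / qpoch_inf q"
proof (induction m arbitrary: n j)
  case 0
  show ?case unfolding tS_base PP_m0 using sums_unique[OF durfee[OF q1, of j]] by simp
next
  case (Suc m)
  show ?case
  proof (cases n)
    case 0
    show ?thesis unfolding 0 tS_base PP_n0 using sums_unique[OF durfee[OF q1, of j]] by simp
  next
    case (Suc n')
    define c where "c = q^(j+m+1)*(1-q^(Suc n'))"
    have "suminf (tS q (Suc m) n j) = suminf (\<lambda>k. tS q m (Suc n') j k + c * tS q m n' (Suc j) k)"
      unfolding Suc tS_rec c_def ..
    also have "\<dots> = suminf (tS q m (Suc n') j) + c * suminf (tS q m n' (Suc j))"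
      using summable_tS by (simp add: suminf_add[symmetric] suminf_mult summable_mult)
    also have "\<dots> = PP q m (Suc n') j / qpoch_inf q + c * (PP q m n' (Suc j) / qpoch_inf q)"
      using Suc.IH by simp
    also have "\<dots> = PP q (Suc m) n j / qpoch_inf q"
      unfolding \<open>n = Suc n'\<close> PP_rec c_def by (simp add: add_divide_distrib)
    finally show ?thesis .
  qed
qed

lemma lhs_conv: "suminf (\<lambda>k. q ^ (k^2 + j*k) / qpoch q k * qpoch_inv q (int n - int k) * qpoch_inv q (int m - int k))
   = PP q m n j / (qpoch q m * qpoch q n)"
proof -
  have "suminf (\<lambda>k. q ^ (k^2 + j*k) / qpoch q k * qpoch_inv q (int n - int k) * qpoch_inv q (int m - int k))
     = (\<Sum>k\<le>m. q ^ (k^2 + j*k) / qpoch q k * qpoch_inv q (int n - int k) * qpoch_inv q (int m - int k))"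
    by (rule suminf_finite) auto
  also have "\<dots> = PP q m n j / (qpoch q m * qpoch q n)"
    unfolding PP_def sum_divide_distrib using nz'[of m] nz'[of n]
    by (intro sum.cong refl) (simp add: field_simps)
  finally show ?thesis .
qed

end

theorem mainTheorem14:
  fixes q :: complex and m n :: nat
  assumes "0 < norm q" and "norm q < 1"
  shows "((1 / qpoch_inf q) * (\<Sum>k. q ^ (k^2) / qpoch q k
            * qpoch_inv q (int n - int k) * qpoch_inv q (int m - int k))
         = (1 / (qpoch q m * qpoch q n)) *
           (\<Sum>k. q ^ (k^2) * qpoch q (m + n + k) / (qpoch q k * qpoch q (m + k) * qpoch q (n + k))))
         \<and> ((1 / qpoch_inf q) * (\<Sum>k. q ^ (k^2 + k) / qpoch q k
            * qpoch_inv q (int n - int k) * qpoch_inv q (int m - int k))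
         = (1 / (qpoch q m * qpoch q n)) *
           (\<Sum>k. q ^ (k^2 + k) * qpoch q (m + n + k + 1) / (qpoch q k * qpoch q (m + k + 1) * qpoch q (n + k + 1))))"
proof -
  have e0: "(\<lambda>k. q ^ (k^2) * qpoch q (m + n + k) / (qpoch q k * qpoch q (m + k) * qpoch q (n + k))) = tS q m n 0"
    by (simp add: tS_def fun_eq_iff)
  have e1: "(\<lambda>k. q ^ (k^2 + k) * qpoch q (m + n + k + 1) / (qpoch q k * qpoch q (m + k + 1) * qpoch q (n + k + 1))) = tS q m n 1"
    by (simp add: tS_def fun_eq_iff)
  have l0: "(\<Sum>k. q ^ (k^2) / qpoch q k * qpoch_inv q (int n - int k) * qpoch_inv q (int m - int k))
     = PP q m n 0 / (qpoch q m * qpoch q n)"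
    using lhs_conv[OF assms(2), of 0 n m] by simp
  have l1: "(\<Sum>k. q ^ (k^2 + k) / qpoch q k * qpoch_inv q (int n - int k) * qpoch_inv q (int m - int k))
     = PP q m n 1 / (qpoch q m * qpoch q n)"
    using lhs_conv[OF assms(2), of 1 n m] by simp
  show ?thesis unfolding e0 e1 l0 l1 main_ind[OF assms(2)] by simp
qed

end
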